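(* Let $m\in\mathbb Z$. Define $F=(f_{n,k})_{n,k\in\mathbb Z}$ by \[ f_{n,k}=x^ky^{-m-k-1}\,\binom{m+n}{n-k}_w\,y^{m+k+1}x^{-k}\prod_{i=1}^{n-k}W(i+k,-m-k-1)\quad(k\le n),\qquad f_{n,k}=0\ (k>n), \] and $G=(g_{k,l})_{k,l\in\mathbb Z}$ by $g_{k,l}=x^l\binom{-m-l-1}{k-l}_wx^{-l}$ for $l\le k$ and $g_{k,l}=0$ for $l>k$. Then $G$ is the inverse of $F$, i.e. $\sum_{k=l}^nf_{n,k}g_{k,l}=\delta_{n,l}$ for all $n,l\in\mathbb Z$ (the sum being $0$ when $n<l$).
   Context: Let $(w(s,t))_{s,t\in\mathbb Z}$ be commuting invertible variables and $\mathbb C_w[x,x^{-1},y,y^{-1}]$ the associative unital $\mathbb C$-algebra generated by $x^{\pm1},y^{\pm1}$ and the $w(s,t)^{\pm1}$ subject to $x^{-1}x=xx^{-1}=1$, $y^{-1}y=yy^{-1}=1$, $yx=w(1,1)xy$, $x\,w(s,t)=w(s+1,t)x$, $y\,w(s,t)=w(s,t+1)y$; thus conjugating an expression in the weights by monomials in $x,y$ shifts the weights, and $f_{n,k},g_{k,l}$ lie in $\mathbb C[(w(s,t))_{s,t\in\mathbb Z}]$. Product convention: $\prod_{j=l}^mA_j=A_l\cdots A_m$ if $m>l-1$, $1$ if $m=l-1$, $A_{l-1}^{-1}\cdots A_{m+1}^{-1}$ if $m<l-1$. $W(s,t)=\prod_{j=1}^tw(s,j)$. $\binom nk_w$ ($n,k\in\mathbb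 Z$) is the unique family with $\binom n0_w=\binom nn_w=1$ for all $n$ and $\binom{n+1}k_w=\binom nk_w+\binom n{k-1}_wW(k,n+1-k)$ whenever $(n+1,k)\ne(0,0)$. *)

theory Defs
  imports Main
begin

text \<open>Weights are modelled as a function w :: int => int => 'a into an arbitrary field,
  with all w s t nonzero (invertible). The paper's weights are free commuting invertible
  variables; an identity among them holds iff it holds for every such assignment.\<close>

definition prodc :: "(int \<Rightarrow> 'a::field) \<Rightarrow> int \<Rightarrow> int \<Rightarrow> 'a" where
  "prodc A l m = (if m \<ge> l - 1 then (\<Prod>j\<in>{l..m}. A j)
                  else (\<Prod>j\<in>{m+1..l-1}. inverse (A j)))"

definition Wf :: "(int \<Rightarrow> int \<Rightarrow> 'a::field) \<Rightarrow> int \<Rightarrow> int \<Rightarrow> 'a" where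
  "Wf w s t = prodc (\<lambda>j. w s j) 1 t"

definition wbinom :: "(int \<Rightarrow> int \<Rightarrow> 'a::field) \<Rightarrow> int \<Rightarrow> int \<Rightarrow> 'a" where
  "wbinom w = (THE B. (\<forall>n. B n 0 = 1) \<and> (\<forall>n. B n n = 1) \<and>
      (\<forall>n k. (n + 1, k) \<noteq> (0, 0) \<longrightarrow> B (n + 1) k = B n k + B n (k - 1) * Wf w k (n + 1 - k)))"

text \<open>Conjugation x^a y^b E y^(-b) x^(-a) of an expression E in the weights replaces
  w(s,t) by w(s+a,t+b).\<close>
definition shiftw :: "int \<Rightarrow> int \<Rightarrow> (int \<Rightarrow> int \<Rightarrow> 'a) \<Rightarrow> int \<Rightarrow> int \<Rightarrow> 'a" where
  "shiftw a b w = (\<lambda>s t. w (s + a) (t + b))"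

definition fmat :: "(int \<Rightarrow> int \<Rightarrow> 'a::field) \<Rightarrow> int \<Rightarrow> int \<Rightarrow> int \<Rightarrow> 'a" where
  "fmat w m n k = (if k \<le> n then
      wbinom (shiftw k (- m - k - 1) w) (m + n) (n - k)
        * prodc (\<lambda>i. Wf w (i + k) (- m - k - 1)) 1 (n - k)
    else 0)"

definition gmat :: "(int \<Rightarrow> int \<Rightarrow> 'a::field) \<Rightarrow> int \<Rightarrow> int \<Rightarrow> int \<Rightarrow> 'a" where
  "gmat w m k l = (if l \<le> k then wbinom (shiftw l 0 w) (- m - l - 1) (k - l) else 0)"

end

theory Submission
  imports Defs
begin

lemma prodc_step:
  assumes "\<And>j. A j \<noteq> 0"
  shows "prodc A 1 t = prodc A 1 (t-1) * A t"
proof (cases "t \<ge> 1")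
  case True
  have "{1..t} = insert t {1..t-1}" using True by auto
  then show ?thesis using True by (simp add: prodc_def mult.commute)
next
  case False
  show ?thesis
  proof (cases "t = 0")
    case True
    then show ?thesis using assms by (simp add: prodc_def)
  next
    case False
    with \<open>\<not> t \<ge> 1\<close> have "t < 0" by simp
    have "{t..0} = insert t {t+1..0}" using \<open>t<0\<close> by auto
    then show ?thesis using \<open>t<0\<close> assms by (simp add: prodc_def mult.assoc)
  qed
qed

lemma prodc_zero: "prodc A 1 0 = 1" by (simp add: prodc_def)

lemma prodc_nz: "(\<And>j. A j \<noteq> 0) \<Longrightarrow> prodc A 1 t \<noteq> (0::'a::field)"
  by (simp add: prodc_def prod_zero_iff)

lemma prodc_shift:
  assumes "\<And>j. A j \<noteq> 0"
  shows "prodc (\<lambda>j. A (j+b)) 1 t * prodc A 1 b = prodc A 1 (t+b)"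
proof (induction t rule: int_induct[where k=0])
  case base show ?case by (simp add: prodc_zero)
next
  case (step1 i)
  have a: "prodc (\<lambda>j. A (j+b)) 1 (i+1) = prodc (\<lambda>j. A (j+b)) 1 i * A (i+1+b)"
    using prodc_step[of "\<lambda>j. A (j+b)" "i+1"] assms by simp
  have b: "prodc A 1 (i+1+b) = prodc A 1 (i+b) * A (i+1+b)"
    using prodc_step[of A "i+1+b"] assms by simp
  have "prodc (\<lambda>j. A (j+b)) 1 (i+1) * prodc A 1 b = (prodc (\<lambda>j. A (j+b)) 1 i * prodc A 1 b) * A (i+1+b)"
    unfolding a by (simp add: algebra_simps)
  also have "\<dots> = prodc A 1 (i+1+b)" using step1.IH b by simp
  finally show ?case by simp
next
  case (step2 i)
  have a: "prodc (\<lambda>j. A (j+b)) 1 i = prodc (\<lambda>j. A (j+b)) 1 (i-1) * A (i+b)"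
    using prodc_step[of "\<lambda>j. A (j+b)" "i"] assms by simp
  have b: "prodc A 1 (i+b) = prodc A 1 (i-1+b) * A (i+b)"
    using prodc_step[of A "i+b"] assms by (simp add: algebra_simps)
  have "(prodc (\<lambda>j. A (j+b)) 1 (i-1) * prodc A 1 b) * A (i+b) = prodc A 1 (i-1+b) * A (i+b)"
    using step2.IH a b by (simp add: algebra_simps)
  then show ?case using assms[of "i+b"] by simp
qed

lemma Wf_zero: "Wf w s 0 = 1" by (simp add: Wf_def prodc_zero)

lemma Wf_nz: "(\<And>s t. w s t \<noteq> 0) \<Longrightarrow> Wf w s t \<noteq> 0"
  unfolding Wf_def by (rule prodc_nz) auto

lemma Wf_step: "(\<And>s t. w s t \<noteq> 0) \<Longrightarrow> Wf w s t = Wf w s (t-1) * w s t"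
  unfolding Wf_def by (rule prodc_step) auto

lemma Wf_shift:
  assumes "\<And>s t. w s t \<noteq> 0"
  shows "Wf (shiftw a b w) s t * Wf w (s+a) b = Wf w (s+a) (t+b)"
  unfolding Wf_def shiftw_def using prodc_shift[of "\<lambda>j. w (s+a) j" b t] assms by simp

lemma shift_nz: "(\<And>s t. w s t \<noteq> 0) \<Longrightarrow> shiftw a b w s t \<noteq> 0"
  by (simp add: shiftw_def)

definition isB :: "(int \<Rightarrow> int \<Rightarrow> 'a::field) \<Rightarrow> (int \<Rightarrow> int \<Rightarrow> 'a) \<Rightarrow> bool" where
  "isB w B \<longleftrightarrow> (\<forall>n. B n 0 = 1) \<and> (\<forall>n. B n n = 1) \<and>
      (\<forall>n k. (n + 1, k) \<noteq> (0, 0) \<longrightarrow> B (n + 1) k = B n k + B n (k - 1) * Wf w k (n + 1 - k))"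

lemma const_int:
  fixes f :: "int \<Rightarrow> 'b" and n m :: int
  assumes "\<And>n. f (n+1) = f n"
  shows "f n = f m"
proof (induction n rule: int_induct[where k=m])
  case (step2 i) then show ?case using assms[of "i-1"] by simp
qed (use assms in auto)

lemma isB_unique:
  assumes nz: "\<And>s t. w s t \<noteq> 0" and B1: "isB w B1" and B2: "isB w B2"
  shows "B1 = B2"
proof -
  define D where "D n k = B1 n k - B2 n k" for n k
  have D0: "D n 0 = 0" for n using B1 B2 by (simp add: isB_def D_def)
  have Dd: "D n n = 0" for n using B1 B2 by (simp add: isB_def D_def)
  have Dr: "D (n+1) k = D n k + D n (k-1) * Wf w k (n + 1 - k)" for n k
  proof (cases "(n+1,k) = (0,0)")
    case True
    then have "n = -1" "k = 0" by auto
    then show ?thesis using D0 Dd[of "-1"] by simp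
  next
    case False
    have "B1 (n+1) k = B1 n k + B1 n (k-1) * Wf w k (n + 1 - k)"
      using B1 False unfolding isB_def by blast
    moreover have "B2 (n+1) k = B2 n k + B2 n (k-1) * Wf w k (n + 1 - k)"
      using B2 False unfolding isB_def by blast
    ultimately show ?thesis unfolding D_def by (simp add: algebra_simps)
  qed
  have neg: "\<forall>n. D n (- int j) = 0" for j
  proof (induction j)
    case 0 then show ?case using D0 by simp
  next
    case (Suc j)
    show ?case
    proof
      fix n
      have "D n (- int j - 1) * Wf w (- int j) (n + 1 + int j) = 0"
        using Dr[of n "- int j"] Suc.IH by simp
      then have "D n (- int j - 1) = 0" using Wf_nz[of w, OF nz] by simp
      moreover have e: "- int (Suc j) = - int j - 1" by simp
      ultimately show "D n (- int (Suc j)) = 0" by (subst e)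
    qed
  qed
  have pos: "\<forall>n. D n (int j) = 0" for j
  proof (induction j)
    case 0 then show ?case using D0 by simp
  next
    case (Suc j)
    show ?case
    proof
      fix n
      have "\<And>n. D (n+1) (int j + 1) = D n (int j + 1)"
        using Dr Suc.IH by (metis add_diff_cancel_right' add_cancel_left_right mult_zero_left)
      then have "D n (int j + 1) = D (int j + 1) (int j + 1)"
        using const_int[of "\<lambda>n. D n (int j + 1)"] by blast
      then show "D n (int (Suc j)) = 0" using Dd by (simp add: add.commute)
    qed
  qed
  have "D n k = 0" for n k
  proof (cases "k \<ge> 0")
    case True then show ?thesis using pos[of "nat k"] by simp
  next
    case False then show ?thesis using neg[of "nat (-k)"] by simp
  qed
  then show ?thesis unfolding D_def by (auto simp: fun_eq_iff)
qed

definition antider :: "(int \<Rightarrow> 'a::field) \<Rightarrow> int \<Rightarrow> int \<Rightarrow> 'a" where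
  "antider g a n = 1 + (if n \<ge> a then (\<Sum>j\<in>{a..n-1}. g j) else - (\<Sum>j\<in>{n..a-1}. g j))"

lemma antider_base: "antider g a a = 1" by (simp add: antider_def)

lemma antider_step: "antider g a (n+1) = antider g a n + g n"
proof -
  consider "n \<ge> a" | "n = a - 1" | "n < a - 1" by linarith
  then show ?thesis
  proof cases
    case 1
    have "{a..n} = insert n {a..n-1}" using 1 by auto
    then show ?thesis using 1 by (simp add: antider_def algebra_simps)
  next
    case 2 then show ?thesis by (simp add: antider_def)
  next
    case 3
    have "{n..a-1} = insert n {n+1..a-1}" using 3 by auto
    then show ?thesis using 3 by (simp add: antider_def algebra_simps)
  qed
qed

primrec Ccol :: "(int \<Rightarrow> int \<Rightarrow> 'a::field) \<Rightarrow> nat \<Rightarrow> int \<Rightarrow> 'a" where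
  "Ccol w 0 = (\<lambda>n. 1)"
| "Ccol w (Suc k) = antider (\<lambda>n. Ccol w k n * Wf w (int k + 1) (n - int k)) (int k + 1)"

primrec Dcol :: "(int \<Rightarrow> int \<Rightarrow> 'a::field) \<Rightarrow> nat \<Rightarrow> int \<Rightarrow> 'a" where
  "Dcol w 0 = (\<lambda>n. 1)"
| "Dcol w (Suc k) = (\<lambda>n. if k = 0 \<and> n = -1 then 1
      else (Dcol w k (n+1) - Dcol w k n) / Wf w (- int k) (n + 1 + int k))"

definition Bfam :: "(int \<Rightarrow> int \<Rightarrow> 'a::field) \<Rightarrow> int \<Rightarrow> int \<Rightarrow> 'a" where
  "Bfam w n k = (if k \<ge> 0 then Ccol w (nat k) n else Dcol w (nat (-k)) n)"

lemma Bfam_neg: "k \<le> 0 \<Longrightarrow> Bfam w n k = Dcol w (nat (-k)) n"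
  by (cases "k = 0") (auto simp: Bfam_def)

lemma Dcol_diag:
  assumes nz: "\<And>s t. w s t \<noteq> 0"
  shows "Dcol w (Suc j) (- int j - 1) = 1 \<and> (\<forall>n < - int j - 1. Dcol w (Suc j) n = 0)"
proof (induction j)
  case 0 then show ?case by simp
next
  case (Suc j)
  have D: "Dcol w (Suc (Suc j)) n = (Dcol w (Suc j) (n+1) - Dcol w (Suc j) n) / Wf w (- int (Suc j)) (n + 1 + int (Suc j))" for n
    by simp
  have e: "- int (Suc j) - 1 + 1 = - int j - 1" by simp
  have e2: "- int (Suc j) - 1 + 1 + int (Suc j) = 0" by simp
  show ?case
  proof
    show "Dcol w (Suc (Suc j)) (- int (Suc j) - 1) = 1"
    proof -
      have z: "Dcol w (Suc j) (- int (Suc j) - 1) = 0" using Suc.IH by (simp del: Dcol.simps)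
      have o: "Dcol w (Suc j) (- int (Suc j) - 1 + 1) = 1" unfolding e using Suc.IH by blast
      show ?thesis unfolding D e2 Wf_zero o z by simp
    qed
    show "\<forall>n < - int (Suc j) - 1. Dcol w (Suc (Suc j)) n = 0"
    proof (intro allI impI)
      fix n :: int assume "n < - int (Suc j) - 1"
      then have "Dcol w (Suc j) (n+1) = 0" "Dcol w (Suc j) n = 0" using Suc.IH by (auto simp del: Dcol.simps)
      then show "Dcol w (Suc (Suc j)) n = 0" unfolding D by (simp del: Dcol.simps)
    qed
  qed
qed

lemma Bfam_isB:
  assumes nz: "\<And>s t. w s t \<noteq> 0"
  shows "isB w (Bfam w)"
  unfolding isB_def
proof (intro conjI allI impI)
  fix n show "Bfam w n 0 = 1" by (simp add: Bfam_def)
next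
  fix n :: int
  show "Bfam w n n = 1"
  proof (cases "n \<ge> 0")
    case True
    show ?thesis
    proof (cases "n = 0")
      case False
      then obtain j where j: "nat n = Suc j" using True by (cases "nat n") auto
      then have "n = int j + 1" using True by simp
      then show ?thesis using True j by (simp add: Bfam_def antider_base)
    qed (simp add: Bfam_def)
  next
    case False
    then obtain j where j: "nat (-n) = Suc j" by (cases "nat (-n)") auto
    then have "n = - int j - 1" using False by simp
    then show ?thesis using False j Dcol_diag[of w, OF nz, of j] by (simp add: Bfam_def)
  qed
next
  fix n k :: int
  assume ex: "(n + 1, k) \<noteq> (0, 0)"
  show "Bfam w (n + 1) k = Bfam w n k + Bfam w n (k - 1) * Wf w k (n + 1 - k)"
  proof (cases "k \<ge> 1")
    case True
    then obtain j where j: "nat k = Suc j" by (cases "nat k") auto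
    then have kj: "k = int j + 1" using True by simp
    have "nat (k - 1) = j" using kj by simp
    then show ?thesis using True j kj antider_step
      by (simp add: Bfam_def)
  next
    case False
    define j where "j = nat (-k)"
    have kj: "k = - int j" using False j_def by simp
    have "nat (-(k-1)) = Suc j" using kj by simp
    then have "Bfam w n (k-1) = Dcol w (Suc j) n" using Bfam_neg[where k="k-1" and w=w and n=n] False by simp
    also have "\<dots> = (Dcol w j (n+1) - Dcol w j n) / Wf w k (n + 1 - k)"
      using ex kj by auto
    also have "\<dots> = (Bfam w (n+1) k - Bfam w n k) / Wf w k (n + 1 - k)"
      using Bfam_neg[where k=k and w=w and n=n] Bfam_neg[where k=k and w=w and n="n+1"] False j_def by simp
    finally show ?thesis using Wf_nz[of w, OF nz, of k "n+1-k"] by (simp add: field_simps)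
  qed
qed

lemma wbinom_isB:
  assumes nz: "\<And>s t. w s t \<noteq> 0"
  shows "isB w (wbinom w)"
proof -
  have "\<exists>!B. isB w B" using Bfam_isB[of w, OF nz] isB_unique[of w, OF nz] by blast
  then have "isB w (THE B. isB w B)" by (rule theI')
  moreover have "wbinom w = (THE B. isB w B)" unfolding wbinom_def isB_def by simp
  ultimately show ?thesis by simp
qed

context
  fixes w :: "int \<Rightarrow> int \<Rightarrow> 'a::field"
  assumes nz: "\<And>s t. w s t \<noteq> 0"
begin

lemma wb0: "wbinom w n 0 = 1" using wbinom_isB[of w, OF nz] by (simp add: isB_def)
lemma wbd: "wbinom w n n = 1" using wbinom_isB[of w, OF nz] by (simp add: isB_def)
lemma wbrec: "(n + 1, k) \<noteq> (0, 0) \<Longrightarrow> wbinom w (n + 1) k = wbinom w n k + wbinom w n (k - 1) * Wf w k (n + 1 - k)"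
  using wbinom_isB[of w, OF nz] unfolding isB_def by blast

lemma wb_above: "n \<ge> 0 \<Longrightarrow> wbinom w n (n + int d + 1) = 0"
proof (induction d arbitrary: n)
  case 0
  have "wbinom w (n + 1) (n+1) = wbinom w n (n+1) + wbinom w n (n + 1 - 1) * Wf w (n+1) (n + 1 - (n+1))"
    using wbrec[of n "n+1"] 0 by simp
  then show ?case using wbd by (simp add: Wf_zero)
next
  case (Suc d)
  have "wbinom w (n + 1) (n + int (Suc d) + 1) = wbinom w n (n + int (Suc d) + 1) + wbinom w n (n + int (Suc d) + 1 - 1) * Wf w (n + int (Suc d) + 1) (n + 1 - (n + int (Suc d) + 1))"
    using wbrec[of n "n + int (Suc d) + 1"] Suc.prems by simp
  moreover have "wbinom w (n + 1) (n + int (Suc d) + 1) = 0"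
    using Suc.IH[of "n+1"] Suc.prems by (simp add: algebra_simps)
  moreover have "wbinom w n (n + int (Suc d) + 1 - 1) = 0"
    using Suc.IH[of n] Suc.prems by (simp add: add.commute add.left_commute)
  ultimately show ?case by simp
qed

end

definition Lv :: "(int \<Rightarrow> int \<Rightarrow> 'a::field) \<Rightarrow> int \<Rightarrow> int \<Rightarrow> int \<Rightarrow> 'a" where
  "Lv w a b r = (\<Sum>i\<in>{0..r}. wbinom w a i * wbinom (shiftw i (a-i) w) b (r-i)
      * (\<Prod>p\<in>{1..r-i}. Wf w (p+i) (a-i)))"

lemma prod_split_last: "(j::int) \<ge> 1 \<Longrightarrow> (\<Prod>p\<in>{1..j}. f p) = (\<Prod>p\<in>{1..j-1}. f p) * f j"
proof -
  assume "j \<ge> 1"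
  then have "{1..j} = insert j {1..j-1}" by auto
  then show ?thesis by (simp add: mult.commute)
qed

lemma sum_split_last: "(r::int) \<ge> 0 \<Longrightarrow> (\<Sum>i\<in>{0..r}. f i) = (\<Sum>i\<in>{0..r-1}. f i) + f r"
proof -
  assume "r \<ge> 0"
  then have "{0..r} = insert r {0..r-1}" by auto
  then show ?thesis by (simp add: add.commute)
qed

context
  fixes w :: "int \<Rightarrow> int \<Rightarrow> 'a::field"
  assumes nz: "\<And>s t. w s t \<noteq> 0"
begin

lemma nzs: "shiftw a b w s t \<noteq> 0" using nz by (simp add: shiftw_def)

lemma Lv0: "Lv w a b 0 = 1"
  unfolding Lv_def using wb0[of w, OF nz] wb0[where w="shiftw 0 a w", OF nzs] by simp

lemma Lv_rec:
  assumes r: "r \<ge> 1"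
  shows "Lv w a (b+1) r = Lv w a b r + Lv w a b (r-1) * Wf w r (a+b+1-r)"
proof -
  define T where "T b i r = wbinom w a i * wbinom (shiftw i (a-i) w) b (r-i)
      * (\<Prod>p\<in>{1..r-i}. Wf w (p+i) (a-i))" for b i r
  have Lv: "Lv w a b r = (\<Sum>i\<in>{0..r}. T b i r)" for b r unfolding Lv_def T_def by simp
  have tm: "T (b+1) i r = T b i r + T b i (r-1) * Wf w r (a+b+1-r)" if i: "i \<in> {0..r-1}" for i
  proof -
    define j where "j = r - i"
    have j1: "j \<ge> 1" using i j_def by auto
    have rj: "r = j + i" using j_def by simp
    have B: "wbinom (shiftw i (a-i) w) (b+1) j = wbinom (shiftw i (a-i) w) b j
        + wbinom (shiftw i (a-i) w) b (j-1) * Wf (shiftw i (a-i) w) j (b+1-j)"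
      using wbrec[where w="shiftw i (a-i) w", OF nzs, of b j] j1 by simp
    have P: "(\<Prod>p\<in>{1..j}. Wf w (p+i) (a-i)) = (\<Prod>p\<in>{1..j-1}. Wf w (p+i) (a-i)) * Wf w (j+i) (a-i)"
      by (rule prod_split_last[OF j1])
    have S: "Wf (shiftw i (a-i) w) j (b+1-j) * Wf w (j+i) (a-i) = Wf w r (a+b+1-r)"
      using Wf_shift[of w i "a-i" j "b+1-j", OF nz] rj by (simp add: algebra_simps)
    have "T (b+1) i r = wbinom w a i * (wbinom (shiftw i (a-i) w) b j
        + wbinom (shiftw i (a-i) w) b (j-1) * Wf (shiftw i (a-i) w) j (b+1-j))
        * ((\<Prod>p\<in>{1..j-1}. Wf w (p+i) (a-i)) * Wf w (j+i) (a-i))"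
      unfolding T_def j_def[symmetric] B P by simp
    also have "\<dots> = wbinom w a i * wbinom (shiftw i (a-i) w) b j * ((\<Prod>p\<in>{1..j-1}. Wf w (p+i) (a-i)) * Wf w (j+i) (a-i))
       + wbinom w a i * wbinom (shiftw i (a-i) w) b (j-1) * (\<Prod>p\<in>{1..j-1}. Wf w (p+i) (a-i))
          * (Wf (shiftw i (a-i) w) j (b+1-j) * Wf w (j+i) (a-i))"
      by (simp add: algebra_simps)
    also have "\<dots> = T b i r + T b i (r-1) * Wf w r (a+b+1-r)"
    proof -
      have e1: "r - i = j" "r - 1 - i = j - 1" using j_def by auto
      have t1: "T b i r = wbinom w a i * wbinom (shiftw i (a-i) w) b j * ((\<Prod>p\<in>{1..j-1}. Wf w (p+i) (a-i)) * Wf w (j+i) (a-i))"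
        unfolding T_def e1 P ..
      have t2: "T b i (r-1) = wbinom w a i * wbinom (shiftw i (a-i) w) b (j-1) * (\<Prod>p\<in>{1..j-1}. Wf w (p+i) (a-i))"
        unfolding T_def e1 ..
      show ?thesis unfolding t1 t2 S ..
    qed
    finally show ?thesis .
  qed
  have last: "T (b+1) r r = T b r r"
    unfolding T_def using wb0[where w="shiftw r (a-r) w", OF nzs] by simp
  have "Lv w a (b+1) r = (\<Sum>i\<in>{0..r-1}. T (b+1) i r) + T (b+1) r r"
    unfolding Lv using r by (subst sum_split_last) simp_all
  also have "\<dots> = (\<Sum>i\<in>{0..r-1}. T b i r + T b i (r-1) * Wf w r (a+b+1-r)) + T b r r"
    using tm last by simp
  also have "\<dots> = ((\<Sum>i\<in>{0..r-1}. T b i r) + T b r r) + (\<Sum>i\<in>{0..r-1}. T b i (r-1)) * Wf w r (a+b+1-r)"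
    by (simp add: sum.distrib sum_distrib_right)
  also have "\<dots> = Lv w a b r + Lv w a b (r-1) * Wf w r (a+b+1-r)"
    unfolding Lv using r by (subst sum_split_last) simp_all
  finally show ?thesis .
qed

end

lemma vandermonde:
  fixes w :: "int \<Rightarrow> int \<Rightarrow> 'a::field"
  assumes nz: "\<And>s t. w s t \<noteq> 0"
  shows "\<forall>r\<ge>0. Lv w a b r = wbinom w (a+b) r"
proof (induction b rule: int_induct[where k=0])
  case base
  show ?case
  proof (intro allI impI)
    fix r :: int assume r: "r \<ge> 0"
    have z: "wbinom (shiftw i (a-i) w) 0 (r-i) = 0" if "i \<in> {0..r-1}" for i
      using wb_above[where w="shiftw i (a-i) w", OF nzs[of w, OF nz], of 0 "nat (r-i-1)"] that by simp
    have "Lv w a 0 r = (\<Sum>i\<in>{0..r-1}. wbinom w a i * wbinom (shiftw i (a-i) w) 0 (r-i)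
      * (\<Prod>p\<in>{1..r-i}. Wf w (p+i) (a-i))) + wbinom w a r * wbinom (shiftw r (a-r) w) 0 0"
      unfolding Lv_def by (subst sum_split_last[OF r]) simp
    also have "\<dots> = wbinom w a r" using z wb0[where w="shiftw r (a-r) w", OF nzs[of w, OF nz]] by simp
    finally show "Lv w a 0 r = wbinom w (a+0) r" by simp
  qed
next
  case (step1 b)
  show ?case
  proof (intro allI impI)
    fix r :: int assume r: "r \<ge> 0"
    show "Lv w a (b+1) r = wbinom w (a+(b+1)) r"
    proof (cases "r = 0")
      case True then show ?thesis using Lv0[of w, OF nz] wb0[of w, OF nz] by simp
    next
      case False
      then have r1: "r \<ge> 1" using r by simp
      have "Lv w a (b+1) r = wbinom w (a+b) r + wbinom w (a+b) (r-1) * Wf w r (a+b+1-r)"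
        using Lv_rec[of w, OF nz r1] step1.IH r r1 by simp
      also have "\<dots> = wbinom w (a+b+1) r" using wbrec[of w, OF nz, of "a+b" r] False by simp
      finally show ?thesis by (simp add: add.assoc)
    qed
  qed
next
  case (step2 b)
  have "Lv w a (b-1) (int r) = wbinom w (a+(b-1)) (int r)" for r :: nat
  proof (induction r)
    case 0 then show ?case using Lv0[of w, OF nz] wb0[of w, OF nz] by simp
  next
    case (Suc r)
    have r1: "int (Suc r) \<ge> 1" by simp
    have "Lv w a (b-1+1) (int (Suc r)) = Lv w a (b-1) (int (Suc r)) + Lv w a (b-1) (int (Suc r)-1) * Wf w (int (Suc r)) (a+(b-1)+1-int (Suc r))"
      using Lv_rec[of w, OF nz r1, of a "b-1"] by simp
    then have "Lv w a (b-1) (int (Suc r)) = wbinom w (a+(b-1)+1) (int (Suc r)) - wbinom w (a+(b-1)) (int r) * Wf w (int (Suc r)) (a+(b-1)+1-int (Suc r))"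
      using step2.IH Suc.IH by (simp add: algebra_simps)
    also have "\<dots> = wbinom w (a+(b-1)) (int (Suc r))"
      using wbrec[of w, OF nz, of "a+(b-1)" "int (Suc r)"] by simp
    finally show ?case .
  qed
  then show ?case by (metis nonneg_int_cases)
qed

lemma shift_shift: "shiftw i c (shiftw l 0 w) = shiftw (i+l) c w"
  by (simp add: shiftw_def fun_eq_iff algebra_simps)

lemma Wf_shift0: "Wf (shiftw l 0 w) s t = Wf w (s+l) t"
  by (simp add: Wf_def shiftw_def)

theorem theorem9:
  fixes w :: "int \<Rightarrow> int \<Rightarrow> 'a::field" and m :: int
  assumes "\<And>s t. w s t \<noteq> 0"
  shows "\<forall>n l. (\<Sum>k\<in>{l..n}. fmat w m n k * gmat w m k l) = (if n = l then 1 else 0)"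
proof (intro allI)
  fix n l :: int
  show "(\<Sum>k\<in>{l..n}. fmat w m n k * gmat w m k l) = (if n = l then 1 else 0)"
  proof (cases "l \<le> n")
    case False then show ?thesis by simp
  next
    case True
    define w' where "w' = shiftw l 0 w"
    have nz': "\<And>s t. w' s t \<noteq> 0" unfolding w'_def using nzs[of w, OF assms] by blast
    define a where "a = -m-l-1"
    define b where "b = m+n"
    define r where "r = n-l"
    have r0: "r \<ge> 0" using True r_def by simp
    have "(\<Sum>k\<in>{l..n}. fmat w m n k * gmat w m k l) = (\<Sum>i\<in>{0..r}. fmat w m n (i+l) * gmat w m (i+l) l)"
      unfolding r_def by (rule sum.reindex_bij_witness[of _ "\<lambda>i. i + l" "\<lambda>k. k - l"]) auto
    also have "\<dots> = Lv w' a b r"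
      unfolding Lv_def
    proof (rule sum.cong[OF refl])
      fix i assume i: "i \<in> {0..r}"
      have ss: "shiftw i (a-i) w' = shiftw (i+l) (- m - (i+l) - 1) w"
        unfolding w'_def shift_shift a_def by (simp add: algebra_simps)
      have pr: "prodc (\<lambda>p. Wf w (p + (i+l)) (- m - (i+l) - 1)) 1 (n - (i+l))
          = (\<Prod>p\<in>{1..r-i}. Wf w' (p+i) (a-i))"
        using i unfolding prodc_def w'_def Wf_shift0 r_def a_def by (simp add: algebra_simps)
      show "fmat w m n (i+l) * gmat w m (i+l) l = wbinom w' a i * wbinom (shiftw i (a-i) w') b (r-i)
          * (\<Prod>p\<in>{1..r-i}. Wf w' (p+i) (a-i))"
        unfolding ss pr[symmetric] using i
        by (simp add: fmat_def gmat_def w'_def a_def b_def r_def algebra_simps)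
    qed
    also have "\<dots> = wbinom w' (a+b) r" using vandermonde[of w', OF nz'] r0 by blast
    also have "\<dots> = (if n = l then 1 else 0)"
    proof (cases "n = l")
      case True then show ?thesis using wb0[of w', OF nz'] by (simp add: r_def)
    next
      case False
      then have "r - 1 \<ge> 0" using r_def \<open>l \<le> n\<close> by simp
      then have "wbinom w' (r-1) (r - 1 + int 0 + 1) = 0" using wb_above[of w', OF nz'] by blast
      moreover have "a + b = r - 1" unfolding a_def b_def r_def by simp
      ultimately show ?thesis using False by simp
    qed
    finally show ?thesis .
  qed
qed

end
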